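(* Let $d \ge 1$ and $\rho \ge 0$ be integers and let $r^{(1)}, \dots, r^{(\rho)} \in (0,1)^d$ be pairwise incomparable points such that for each $j \in [d]$ the $\rho$ values $r^{(i)}_j$, $i \in [\rho]$, are distinct. Let $S$ be the record-setting region and $I$ the set of interior generators of these points. A point $g \in [0,1)^d$ belongs to $I$ if and only if (i) $g \in S$, and (ii) there exist $d$ distinct indices $i_1, \dots, i_d \in [\rho]$ such that $$g_j = r^{(i_j)}_j = \min\{ r^{(i_\ell)}_j : \ell \in [d]\} \quad \text{for every } j \in [d].$$
   Context: Notation: $[n] = \{1,\dots,n\}$. For $x,y \in \mathbb{R}^d$, $x \prec y$ means $x_j < y_j$ for all $j \in [d]$; $x \le y$ means $x_j \le y_j$ for all $j$; $x < y$ means $x \le y$ and $x \ne y$. Two points are incomparable if neither is $\le$ the other. Given points $r^{(1)},\dots,r^{(\rho)}$ (the "current records"), the record-setting region is $S := \{x \in [0,1)^d : x \not\prec r^{(i)} \text{ for all } i \in [\rho]\}$. The generators of $S$ are the minimal elements of $S$ with respect to the partial order $\le$; the set of generators is denoted $G$. A point $x \in [0,1)^d$ is interior if all its coordinates are nonzero, and $I := \{g \in G : g \text{ interior}\}$ is the set of interior generators. *)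

theory Defs
  imports "HOL-Analysis.Analysis"
begin

text \<open>Points of R^d are vectors real^'d, the index type 'd having d = CARD('d) elements.\<close>

definition vstrict :: "real^'d \<Rightarrow> real^'d \<Rightarrow> bool" where
  "vstrict x y \<longleftrightarrow> (\<forall>j. x $ j < y $ j)"

definition vle :: "real^'d \<Rightarrow> real^'d \<Rightarrow> bool" where
  "vle x y \<longleftrightarrow> (\<forall>j. x $ j \<le> y $ j)"

definition halfopen_cube :: "(real^'d) set" where
  "halfopen_cube = {x. \<forall>j. 0 \<le> x $ j \<and> x $ j < 1}"

definition open_cube :: "(real^'d) set" where
  "open_cube = {x. \<forall>j. 0 < x $ j \<and> x $ j < 1}"

definition record_region :: "(nat \<Rightarrow> real^'d) \<Rightarrow> nat \<Rightarrow> (real^'d) set" where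
  "record_region r \<rho> = {x \<in> halfopen_cube. \<forall>i\<in>{1..\<rho>}. \<not> vstrict x (r i)}"

definition generators :: "(nat \<Rightarrow> real^'d) \<Rightarrow> nat \<Rightarrow> (real^'d) set" where
  "generators r \<rho> = {g \<in> record_region r \<rho>.
      \<not> (\<exists>x\<in>record_region r \<rho>. vle x g \<and> x \<noteq> g)}"

definition interior_pt :: "real^'d \<Rightarrow> bool" where
  "interior_pt x \<longleftrightarrow> (\<forall>j. x $ j \<noteq> 0)"

definition interior_generators :: "(nat \<Rightarrow> real^'d) \<Rightarrow> nat \<Rightarrow> (real^'d) set" where
  "interior_generators r \<rho> = {g \<in> generators r \<rho>. interior_pt g}"

end

theory Submission
  imports Defs
begin

lemma exists_idx:
  fixes r :: "nat \<Rightarrow> real^'d" and g :: "real^'d"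
  assumes gen: "g \<in> generators r \<rho>" and nz: "g $ j \<noteq> 0"
  shows "\<exists>i\<in>{1..\<rho>}. g $ j = r i $ j \<and> (\<forall>k. k \<noteq> j \<longrightarrow> g $ k < r i $ k)"
proof (rule ccontr)
  assume neg: "\<not> ?thesis"
  have gS: "g \<in> record_region r \<rho>" and minl: "\<not> (\<exists>x\<in>record_region r \<rho>. vle x g \<and> x \<noteq> g)"
    using gen unfolding generators_def by auto
  have gc: "g \<in> halfopen_cube" and gns: "\<forall>i\<in>{1..\<rho>}. \<not> vstrict g (r i)"
    using gS unfolding record_region_def by auto
  have "0 \<le> g $ j" using gc unfolding halfopen_cube_def by auto
  then have g0: "g $ j > 0" using nz by linarith
  define B where "B = {i \<in> {1..\<rho>}. \<forall>k. k \<noteq> j \<longrightarrow> g $ k < r i $ k}"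
  have Blt: "r i $ j < g $ j" if "i \<in> B" for i
  proof -
    have i1: "i \<in> {1..\<rho>}" and ik: "\<forall>k. k \<noteq> j \<longrightarrow> g $ k < r i $ k" using that B_def by auto
    have "\<not> vstrict g (r i)" using gns i1 by auto
    then have "r i $ j \<le> g $ j" using ik unfolding vstrict_def by (metis not_le)
    moreover have "g $ j \<noteq> r i $ j" using neg i1 ik by auto
    ultimately show ?thesis by auto
  qed
  define t where "t = Max (insert 0 ((\<lambda>i. r i $ j) ` B))"
  have finB: "finite B" unfolding B_def by auto
  have tlt: "t < g $ j" unfolding t_def using finB Blt g0 by (subst Max_less_iff) auto
  have tge0: "t \<ge> 0" unfolding t_def using finB by (intro Max_ge) auto
  have tgeB: "t \<ge> r i $ j" if "i \<in> B" for i unfolding t_def using finB that by (intro Max_ge) auto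
  define x where "x = (\<chi> k. if k = j then t else g $ k)"
  have xj: "x $ j = t" and xk: "\<And>k. k \<noteq> j \<Longrightarrow> x $ k = g $ k" unfolding x_def by auto
  have g1: "g $ j < 1" using gc unfolding halfopen_cube_def by auto
  have "t < 1" using g1 tlt by linarith
  then have xc: "x \<in> halfopen_cube" using gc tge0 unfolding halfopen_cube_def x_def by auto
  have xS: "x \<in> record_region r \<rho>"
    unfolding record_region_def
  proof (intro CollectI conjI ballI xc)
    fix i assume i1: "i \<in> {1..\<rho>}"
    show "\<not> vstrict x (r i)"
    proof (cases "i \<in> B")
      case True then show ?thesis using tgeB xj unfolding vstrict_def by (metis not_le)
    next
      case False
      then obtain k where "k \<noteq> j" "\<not> g $ k < r i $ k" using i1 B_def by auto
      then show ?thesis using xk unfolding vstrict_def by metis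
    qed
  qed
  have "vle x g" unfolding vle_def using xj xk tlt by (metis less_eq_real_def order_refl)
  moreover have "x \<noteq> g" using xj tlt by auto
  ultimately show False using minl xS by auto
qed

theorem theoremT:
  fixes r :: "nat \<Rightarrow> real^'d" and \<rho> :: nat and g :: "real^'d"
  assumes in_cube: "\<forall>i\<in>{1..\<rho>}. r i \<in> open_cube"
    and incomparable: "\<forall>i\<in>{1..\<rho>}. \<forall>k\<in>{1..\<rho>}. i \<noteq> k \<longrightarrow> \<not> vle (r i) (r k)"
    and distinct_coords: "\<forall>j. inj_on (\<lambda>i. r i $ j) {1..\<rho>}"
    and g_cube: "g \<in> halfopen_cube"
  shows "g \<in> interior_generators r \<rho> \<longleftrightarrow>
           (g \<in> record_region r \<rho> \<and>
            (\<exists>idx :: 'd \<Rightarrow> nat. inj idx \<and> (\<forall>j. idx j \<in> {1..\<rho>}) \<and>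
               (\<forall>j. g $ j = r (idx j) $ j \<and> g $ j = Min {r (idx l) $ j | l. True})))"
proof
  assume gI: "g \<in> interior_generators r \<rho>"
  then have gen: "g \<in> generators r \<rho>" and int: "interior_pt g"
    unfolding interior_generators_def by auto
  have "\<forall>j. \<exists>i\<in>{1..\<rho>}. g $ j = r i $ j \<and> (\<forall>k. k \<noteq> j \<longrightarrow> g $ k < r i $ k)"
    using exists_idx[OF gen] int unfolding interior_pt_def by auto
  then obtain idx where idx: "\<And>j. idx j \<in> {1..\<rho>}" "\<And>j. g $ j = r (idx j) $ j"
    "\<And>j k. k \<noteq> j \<Longrightarrow> g $ k < r (idx j) $ k" by metis
  have inj: "inj idx"
  proof (rule injI)
    fix a b assume "idx a = idx b"
    then show "a = b" using idx(2,3) by (metis less_irrefl)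
  qed
  have mn: "g $ j = Min {r (idx l) $ j | l. True}" for j
  proof -
    have eq: "{r (idx l) $ j | l. True} = range (\<lambda>l. r (idx l) $ j)" by auto
    have "Min (range (\<lambda>l. r (idx l) $ j)) = g $ j"
    proof (rule Min_eqI)
      show "finite (range (\<lambda>l. r (idx l) $ j))" by simp
      show "g $ j \<in> range (\<lambda>l. r (idx l) $ j)" using idx(2) by auto
      fix y assume "y \<in> range (\<lambda>l. r (idx l) $ j)"
      then obtain l where y: "y = r (idx l) $ j" by auto
      show "g $ j \<le> y"
      proof (cases "l = j")
        case True then show ?thesis using y idx(2) by simp
      next
        case False then show ?thesis using y idx(3)[of j l] by simp
      qed
    qed
    then show ?thesis unfolding eq by simp
  qed
  show "g \<in> record_region r \<rho> \<and>
            (\<exists>idx :: 'd \<Rightarrow> nat. inj idx \<and> (\<forall>j. idx j \<in> {1..\<rho>}) \<and>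
               (\<forall>j. g $ j = r (idx j) $ j \<and> g $ j = Min {r (idx l) $ j | l. True}))"
  proof -
    have "g \<in> record_region r \<rho>" using gen unfolding generators_def by auto
    moreover have "\<forall>j. g $ j = r (idx j) $ j \<and> g $ j = Min {r (idx l) $ j | l. True}"
      using idx(2) mn by auto
    ultimately show ?thesis using inj idx(1) by blast
  qed
next
  assume R: "g \<in> record_region r \<rho> \<and>
            (\<exists>idx :: 'd \<Rightarrow> nat. inj idx \<and> (\<forall>j. idx j \<in> {1..\<rho>}) \<and>
               (\<forall>j. g $ j = r (idx j) $ j \<and> g $ j = Min {r (idx l) $ j | l. True}))"
  then have gS: "g \<in> record_region r \<rho>" by auto
  from R obtain idx :: "'d \<Rightarrow> nat" where inj: "inj idx" and idx1: "\<forall>j. idx j \<in> {1..\<rho>}"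
    and eqj: "\<forall>j. g $ j = r (idx j) $ j" and mn: "\<forall>j. g $ j = Min {r (idx l) $ j | l. True}" by blast
  have pos: "0 < g $ j" for j
  proof -
    have "r (idx j) \<in> open_cube" using idx1 in_cube by blast
    then have "0 < r (idx j) $ j" unfolding open_cube_def by blast
    then show ?thesis using eqj by simp
  qed
  have int: "interior_pt g" unfolding interior_pt_def using pos by (simp add: less_imp_neq[symmetric] order_less_imp_not_eq2)
  have le: "g $ k \<le> r (idx j) $ k" for j k
  proof -
    have eq: "{r (idx l) $ k | l. True} = range (\<lambda>l. r (idx l) $ k)" by auto
    have "Min (range (\<lambda>l. r (idx l) $ k)) \<le> r (idx j) $ k" by (rule Min_le) auto
    moreover have "g $ k = Min (range (\<lambda>l. r (idx l) $ k))" using spec[OF mn, of k] unfolding eq .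
    ultimately show ?thesis by simp
  qed
  have lt: "g $ k < r (idx j) $ k" if "k \<noteq> j" for j k
  proof -
    have "idx k \<noteq> idx j" using inj that by (meson injD)
    then have "r (idx k) $ k \<noteq> r (idx j) $ k" using distinct_coords idx1
      by (meson inj_on_contraD)
    then show ?thesis using le[of k j] eqj by (metis le_less)
  qed
  have "\<not> (\<exists>x\<in>record_region r \<rho>. vle x g \<and> x \<noteq> g)"
  proof
    assume "\<exists>x\<in>record_region r \<rho>. vle x g \<and> x \<noteq> g"
    then obtain x where xS: "x \<in> record_region r \<rho>" and xle: "vle x g" and xne: "x \<noteq> g" by blast
    obtain j where "x $ j \<noteq> g $ j" using xne by (metis vec_eq_iff)
    then have xj: "x $ j < g $ j" using xle unfolding vle_def by (metis less_eq_real_def)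
    have "vstrict x (r (idx j))" unfolding vstrict_def
    proof
      fix k show "x $ k < r (idx j) $ k"
        using xj eqj lt[of k j] xle unfolding vle_def by (metis le_less_trans)
    qed
    then show False using xS idx1 unfolding record_region_def by auto
  qed
  then show "g \<in> interior_generators r \<rho>"
    using gS int unfolding interior_generators_def generators_def by auto
qed

end
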